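(* Let $R$ be a commutative ring containing $\mathbb Q$, let $f\in1+xR[[x]]$, and for $n\ge0$ set $$P_n:=\sum_{s=0}^n\frac{(-1)^s}{s!\,(n-s)!}\prod_{k=-(n-s)}^{s}f(kx)\in R[[x]].$$ Then the coefficients of $x^0,\dots,x^{n-1}$ in $P_n$ vanish and the coefficient of $x^n$ equals $(-1)^n$ times the coefficient of $x^n$ in $f^{n+1}$, i.e. $$P_n=(-1)^n\Bigl(\frac1{n!}\frac{d^n}{dx^n}\Big|_{x=0}f(x)^{n+1}\Bigr)x^n+O(x^{n+1}).$$ *)

theory Defs
  imports "HOL-Computational_Algebra.Formal_Power_Series"
begin

text \<open>Inverse of a positive integer in a commutative ring containing the rationals
  (i.e. a ring in which every positive integer is a unit).\<close>
definition nat_inv :: "nat \<Rightarrow> 'a::comm_ring_1" where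
  "nat_inv n = (SOME y. of_nat n * y = 1)"

definition P_series :: "'a::comm_ring_1 fps \<Rightarrow> nat \<Rightarrow> 'a fps" where
  "P_series f n = (\<Sum>s = 0..n.
      fps_const ((-1) ^ s * nat_inv (fact s) * nat_inv (fact (n - s))) *
      (\<Prod>k \<in> {- int (n - s) .. int s}. f oo (fps_const (of_int k) * fps_X)))"

end

theory Submission imports Defs "HOL-Computational_Algebra.Polynomial" begin

lemma coeff_mult_top:
  fixes p q :: "'a::comm_ring_1 poly"
  assumes "degree p \<le> a" "degree q \<le> b"
  shows "coeff (p*q) (a+b) = coeff p a * coeff q b"
proof -
  have "coeff (p*q) (a+b) = (\<Sum>i\<le>a+b. if i = a then coeff p a * coeff q b else 0)"
    unfolding coeff_mult
  proof (rule sum.cong[OF refl])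
    fix i assume "i \<in> {..a+b}"
    show "coeff p i * coeff q (a + b - i) = (if i = a then coeff p a * coeff q b else 0)"
    proof (cases "i < a")
      case True then have "a+b-i > b" by auto
      then show ?thesis using assms True by (simp add: coeff_eq_0)
    next
      case False then show ?thesis using assms by (cases "i = a") (auto simp: coeff_eq_0)
    qed
  qed
  then show ?thesis by simp
qed

lemma coeff_power_top:
  fixes p :: "'a::comm_ring_1 poly"
  assumes "degree p \<le> d"
  shows "degree (p^j) \<le> d*j \<and> coeff (p^j) (d*j) = coeff p d ^ j"
proof (induction j)
  case 0 then show ?case by simp
next
  case (Suc j)
  have "degree (p^Suc j) \<le> d + d*j" using degree_mult_le[of p "p^j"] Suc assms by simp
  moreover have "coeff (p^Suc j) (d + d*j) = coeff p d * coeff (p^j) (d*j)"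
    using coeff_mult_top[OF assms, of "p^j" "d*j"] Suc by simp
  ultimately show ?case using Suc by simp
qed

lemma pascal_sum:
  fixes g :: "nat \<Rightarrow> 'a::comm_ring_1"
  shows "(\<Sum>s\<le>Suc n. (-1)^s * of_nat (Suc n choose s) * g s) =
         (\<Sum>s\<le>n. (-1)^s * of_nat (n choose s) * (g s - g (Suc s)))"
proof -
  have L: "(\<Sum>s\<le>Suc n. (-1)^s * of_nat (Suc n choose s) * g s) =
     g 0 - (\<Sum>s\<le>n. (-1)^s * of_nat (n choose s) * g (Suc s))
         - (\<Sum>s\<le>n. (-1)^s * of_nat (n choose Suc s) * g (Suc s))"
    by (simp only: sum.atMost_Suc_shift) (simp add: algebra_simps sum.distrib sum_negf sum_subtractf)
  have "(\<Sum>s\<le>n. (-1)^s * of_nat (n choose s) * g s) = (\<Sum>s\<le>Suc n. (-1)^s * of_nat (n choose s) * g s)"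
    by (simp add: binomial_eq_0)
  also have "\<dots> = g 0 - (\<Sum>s\<le>n. (-1)^s * of_nat (n choose Suc s) * g (Suc s))"
    by (simp only: sum.atMost_Suc_shift) (simp add: sum_negf)
  finally have R: "(\<Sum>s\<le>n. (-1)^s * of_nat (n choose s) * g s) = \<dots>" .
  show ?thesis unfolding L
    by (simp add: right_diff_distrib sum_subtractf R)
qed

lemma fin_diff_monom:
  "\<forall>(b::'a::comm_ring_1) d. d \<le> n \<longrightarrow>
     (\<Sum>s\<le>n. (-1)^s * of_nat (n choose s) * (of_nat s + b)^d) =
     (if d = n then (-1)^n * of_nat (fact n) else 0)"
proof (induction n)
  case 0 then show ?case by simp
next
  case (Suc n)
  show ?case
  proof (intro allI impI)
    fix b :: 'a and d assume d: "d \<le> Suc n"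
    have diff: "(of_nat s + b)^d - (of_nat (Suc s) + b)^d =
        - (\<Sum>e<d. of_nat (d choose e) * (of_nat s + b)^e)" for s
    proof -
      have "(of_nat (Suc s) + b)^d = ((of_nat s + b) + 1)^d" by (simp add: algebra_simps)
      also have "\<dots> = (\<Sum>e\<le>d. of_nat (d choose e) * (of_nat s + b)^e)"
        by (simp add: binomial_ring)
      also have "\<dots> = (\<Sum>e<d. of_nat (d choose e) * (of_nat s + b)^e) + (of_nat s + b)^d"
        by (simp add: lessThan_Suc_atMost[symmetric])
      finally show ?thesis by simp
    qed
    have "(\<Sum>s\<le>Suc n. (-1)^s * of_nat (Suc n choose s) * (of_nat s + b)^d) =
       (\<Sum>s\<le>n. (-1)^s * of_nat (n choose s) * ((of_nat s + b)^d - (of_nat (Suc s) + b)^d))"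
      by (rule pascal_sum)
    also have "\<dots> = - (\<Sum>e<d. of_nat (d choose e) *
        (\<Sum>s\<le>n. (-1)^s * of_nat (n choose s) * (of_nat s + b)^e))"
      unfolding diff
      apply (simp only: sum_distrib_left mult_minus_right sum_negf)
      apply (subst sum.swap)
      apply (simp add: mult_ac)
      done
    also have "\<dots> = - (\<Sum>e<d. of_nat (d choose e) * (if e = n then (-1)^n * of_nat (fact n) else 0))"
      using Suc.IH d by (intro arg_cong[where f=uminus] sum.cong) auto
    also have "\<dots> = (if d = Suc n then (-1)^Suc n * of_nat (fact (Suc n)) else 0)"
    proof (cases "d = Suc n")
      case True
      then show ?thesis by (simp add: if_distrib[of "\<lambda>x. _ * x"] cong: if_cong) (simp add: algebra_simps)
    next
      case False
      then have "\<forall>e<d. e \<noteq> n" using d by auto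
      then show ?thesis using False by simp
    qed
    finally show "(\<Sum>s\<le>Suc n. (-1)^s * of_nat (Suc n choose s) * (of_nat s + b)^d) =
       (if d = Suc n then (-1)^Suc n * of_nat (fact (Suc n)) else 0)" .
  qed
qed

lemma fin_diff_poly:
  fixes p :: "'a::comm_ring_1 poly"
  assumes "degree p \<le> n"
  shows "(\<Sum>s\<le>n. (-1)^s * of_nat (n choose s) * poly p (of_nat s + b)) =
     (-1)^n * of_nat (fact n) * coeff p n"
proof -
  have pa: "poly p x = (\<Sum>d\<le>n. coeff p d * x^d)" for x
    unfolding poly_altdef
    by (rule sum.mono_neutral_left) (use assms in \<open>auto simp: coeff_eq_0\<close>)
  have "(\<Sum>s\<le>n. (-1)^s * of_nat (n choose s) * poly p (of_nat s + b)) =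
     (\<Sum>d\<le>n. coeff p d * (\<Sum>s\<le>n. (-1)^s * of_nat (n choose s) * (of_nat s + b)^d))"
    unfolding pa
      apply (simp only: sum_distrib_left)
      apply (subst sum.swap)
      apply (simp add: mult_ac)
      done
  also have "\<dots> = (\<Sum>d\<le>n. coeff p d * (if d = n then (-1)^n * of_nat (fact n) else 0))"
    by (intro sum.cong refl) (simp add: fin_diff_monom[rule_format])
  also have "\<dots> = (-1)^n * of_nat (fact n) * coeff p n"
    by (simp add: if_distrib[of "\<lambda>x. _ * x"] cong: if_cong)
  finally show ?thesis .
qed


lemma prod_coeff_poly:
  fixes f :: "'a::comm_ring_1 fps" and I :: "nat set"
  assumes "finite I"
  shows "\<forall>m. \<exists>q. degree q \<le> m \<and> coeff q m = fps_nth (f ^ card I) m \<and>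
     (\<forall>y. fps_nth (\<Prod>i\<in>I. f oo (fps_const (of_nat i + y) * fps_X)) m = poly q y)"
  using assms
proof (induction I rule: finite_induct)
  case empty
  show ?case
  proof
    fix m
    show "\<exists>q. degree q \<le> m \<and> coeff q m = fps_nth (f ^ card ({}::nat set)) m \<and>
     (\<forall>y. fps_nth (\<Prod>i\<in>{}. f oo (fps_const (of_nat i + y) * fps_X)) m = poly q y)"
      by (rule exI[of _ "[:if m = 0 then 1 else 0:]"]) auto
  qed
next
  case (insert i I)
  from insert.IH obtain Q where Q: "\<And>m. degree (Q m) \<le> m \<and> coeff (Q m) m = fps_nth (f ^ card I) m \<and>
     (\<forall>y. fps_nth (\<Prod>i\<in>I. f oo (fps_const (of_nat i + y) * fps_X)) m = poly (Q m) y)"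
    by metis
  show ?case
  proof
    fix m
    define q where "q = (\<Sum>j\<le>m. smult (fps_nth f j) ([:of_nat i, 1:]^j * Q (m-j)))"
    have lin: "degree [:of_nat i, 1:] \<le> (1::nat)" by simp
    have dq: "degree q \<le> m"
      unfolding q_def
    proof (rule degree_sum_le)
      fix j assume "j \<in> {..m}"
      have "degree ([:of_nat i, 1:]^j * Q (m-j)) \<le> degree ([:(of_nat i::'a), 1:]^j) + degree (Q (m-j))"
        by (rule degree_mult_le)
      also have "\<dots> \<le> j + (m - j)"
        using coeff_power_top[OF lin, of j] Q[of "m-j"] by (auto intro: add_mono)
      finally show "degree (smult (fps_nth f j) ([:of_nat i, 1:]^j * Q (m-j))) \<le> m"
        using \<open>j \<in> {..m}\<close> degree_smult_le order.trans by fastforce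
    qed auto
    have cq: "coeff q m = fps_nth (f ^ card (insert i I)) m"
    proof -
      have "coeff q m = (\<Sum>j\<le>m. fps_nth f j * fps_nth (f ^ card I) (m - j))"
        unfolding q_def coeff_sum coeff_smult
      proof (rule sum.cong[OF refl])
        fix j assume "j \<in> {..m}"
        then have "coeff ([:of_nat i, 1:]^j * Q (m-j)) (j + (m-j)) =
            coeff ([:(of_nat i::'a), 1:]^j) j * coeff (Q (m-j)) (m-j)"
          using coeff_power_top[OF lin, of j] Q[of "m-j"] by (intro coeff_mult_top) auto
        moreover have "coeff ([:(of_nat i::'a), 1:]^j) j = 1"
          using coeff_power_top[OF lin, of j] by auto
        ultimately show "fps_nth f j * coeff ([:of_nat i, 1:]^j * Q (m-j)) m =
            fps_nth f j * fps_nth (f ^ card I) (m - j)"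
          using \<open>j \<in> {..m}\<close> Q[of "m-j"] by simp
      qed
      also have "\<dots> = fps_nth (f * f ^ card I) m"
        by (simp add: fps_mult_nth atLeast0AtMost)
      finally show ?thesis using insert.hyps by simp
    qed
    have pq: "fps_nth (\<Prod>k\<in>insert i I. f oo (fps_const (of_nat k + y) * fps_X)) m = poly q y" for y
    proof -
      have "fps_nth (\<Prod>k\<in>insert i I. f oo (fps_const (of_nat k + y) * fps_X)) m =
         fps_nth ((f oo (fps_const (of_nat i + y) * fps_X)) * (\<Prod>k\<in>I. f oo (fps_const (of_nat k + y) * fps_X))) m"
        using insert.hyps by simp
      also have "\<dots> = (\<Sum>j\<le>m. (of_nat i + y)^j * fps_nth f j * poly (Q (m-j)) y)"
        unfolding fps_mult_nth atLeast0AtMost using Q by simp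
      also have "\<dots> = poly q y"
        unfolding q_def poly_sum by (simp add: poly_monom algebra_simps)
      finally show ?thesis .
    qed
    show "\<exists>q. degree q \<le> m \<and> coeff q m = fps_nth (f ^ card (insert i I)) m \<and>
     (\<forall>y. fps_nth (\<Prod>i\<in>insert i I. f oo (fps_const (of_nat i + y) * fps_X)) m = poly q y)"
      using dq cq pq by blast
  qed
qed


lemma nat_inv_mult:
  assumes QQ: "\<And>m::nat. m > 0 \<Longrightarrow> (of_nat m :: 'a::comm_ring_1) dvd 1" and k: "k > 0"
  shows "(of_nat k :: 'a) * nat_inv k = 1"
proof -
  have "\<exists>y. (of_nat k :: 'a) * y = 1" using QQ[OF k] by (metis dvd_def)
  then show ?thesis unfolding nat_inv_def by (rule someI_ex)
qed

lemma P_series_coeff: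
  fixes f :: "'a::comm_ring_1 fps"
  assumes QQ: "\<And>m::nat. m > 0 \<Longrightarrow> (of_nat m :: 'a) dvd 1" and mn: "m \<le> n"
  shows "\<exists>q. degree q \<le> m \<and> coeff q m = fps_nth (f ^ (n+1)) m \<and>
     fps_nth (P_series f n) m = (-1)^n * coeff q n"
proof -
  have reidx: "(\<Prod>k\<in>{- int (n - s) .. int s}. f oo (fps_const (of_int k) * fps_X)) =
     (\<Prod>i\<in>{0..n}. f oo (fps_const (of_nat i + (of_nat s - of_nat n)) * fps_X))" if "s \<le> n" for s
    by (rule prod.reindex_bij_witness[of _ "\<lambda>i. int i - int (n-s)" "\<lambda>k. nat (k + int (n-s))"])
       (use that in \<open>auto simp: of_nat_diff algebra_simps\<close>)
  obtain q where q: "degree q \<le> m" "coeff q m = fps_nth (f ^ card {0..n}) m"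
    "\<And>y. fps_nth (\<Prod>i\<in>{0..n}. f oo (fps_const (of_nat i + y) * fps_X)) m = poly q y"
    using prod_coeff_poly[of "{0..n}" f] by blast
  define c :: "nat \<Rightarrow> 'a" where "c s = (-1) ^ s * nat_inv (fact s) * nat_inv (fact (n - s))" for s
  have P: "fps_nth (P_series f n) m = (\<Sum>s\<le>n. c s * poly q (of_nat s + - of_nat n))"
    unfolding P_series_def fps_sum_nth c_def atLeast0AtMost
    by (intro sum.cong refl) (simp only: atMost_iff reidx q(3) diff_conv_add_uminus fps_mult_left_const_nth)
  have key: "of_nat (fact n) * c s = (-1)^s * of_nat (n choose s)" if "s \<le> n" for s
  proof -
    have "(of_nat (fact n) :: 'a) = of_nat (fact s) * of_nat (fact (n - s)) * of_nat (n choose s)"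
      using binomial_fact_lemma[OF that] by (metis of_nat_mult)
    then have "of_nat (fact n) * c s = (-1)^s * of_nat (n choose s) *
       ((of_nat (fact s) * nat_inv (fact s)) * (of_nat (fact (n - s)) * nat_inv (fact (n - s))))"
      unfolding c_def by (simp add: mult_ac)
    also have "\<dots> = (-1)^s * of_nat (n choose s)"
      using nat_inv_mult[OF QQ, of "fact s"] nat_inv_mult[OF QQ, of "fact (n-s)"] by simp
    finally show ?thesis .
  qed
  have "of_nat (fact n) * fps_nth (P_series f n) m =
      (\<Sum>s\<le>n. (-1)^s * of_nat (n choose s) * poly q (of_nat s + - of_nat n))"
    unfolding P sum_distrib_left
    by (intro sum.cong refl) (simp add: key mult.assoc[symmetric])
  also have "\<dots> = (-1)^n * of_nat (fact n) * coeff q n"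
    by (rule fin_diff_poly) (use q(1) mn in auto)
  finally have E: "of_nat (fact n) * fps_nth (P_series f n) m = of_nat (fact n) * ((-1)^n * coeff q n)"
    by (simp add: mult_ac)
  have "fps_nth (P_series f n) m = nat_inv (fact n) * (of_nat (fact n) * fps_nth (P_series f n) m)"
    using nat_inv_mult[OF QQ, of "fact n"] by (metis fact_gt_zero mult.assoc mult.commute mult.left_neutral)
  also have "\<dots> = (-1)^n * coeff q n"
    unfolding E using nat_inv_mult[OF QQ, of "fact n"] by (metis fact_gt_zero mult.assoc mult.commute mult.left_neutral)
  finally show ?thesis using q by auto
qed

theorem mainTheorem19:
  fixes f :: "'a::comm_ring_1 fps" and n :: nat
  assumes QQ: "\<And>m::nat. m > 0 \<Longrightarrow> (of_nat m :: 'a) dvd 1"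
    and f0: "fps_nth f 0 = 1"
  shows "(\<forall>m < n. fps_nth (P_series f n) m = 0) \<and>
         fps_nth (P_series f n) n = (-1) ^ n * fps_nth (f ^ (n + 1)) n"
proof
  show "\<forall>m < n. fps_nth (P_series f n) m = 0"
  proof (intro allI impI)
    fix m assume "m < n"
    then obtain q where "degree q \<le> m" "fps_nth (P_series f n) m = (-1)^n * coeff q n"
      using P_series_coeff[OF QQ, of m n f] by auto
    then show "fps_nth (P_series f n) m = 0" using \<open>m < n\<close> by (simp add: coeff_eq_0)
  qed
  show "fps_nth (P_series f n) n = (-1) ^ n * fps_nth (f ^ (n + 1)) n"
    using P_series_coeff[OF QQ, of n n f] by auto
qed

end
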